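(* Let $p$ be a peak of a coherent tangent bundle $(\mathcal E,\langle\,,\rangle,D,\psi)$ on $M^2$, let $(U;u,v)$ be a $g$-coordinate system at $p$, and let $\gamma\colon[0,1)\to U$ be a $C^1$-regular curve with $\gamma(0)=p$ such that either (1) $\dot\gamma(0)$ is not a null vector (i.e. $\psi_p(\dot\gamma(0))\neq 0$), or (2) $\gamma$ is a singular curve (i.e. $\gamma([0,1))\subset\Sigma$). Then the limit $$\Psi_\gamma:=\lim_{t\to+0}\frac{\psi(\dot\gamma(t))}{|\psi(\dot\gamma(t))|}\in\mathcal E_p$$ exists.
   Context: A coherent tangent bundle over an oriented $2$-manifold $M^2$ is a tuple $(\mathcal E,\langle\,,\rangle,D,\psi)$ where $\mathcal E$ is an orientable rank-$2$ vector bundle over $M^2$ with a fiber metric $\langle\,,\rangle$ and a metric connection $D$, and $\psi\colon TM^2\to\mathcal E$ is a bundle homomorphism satisfying $D_X\psi(Y)-D_Y\psi(X)=\psi([X,Y])$. Fix a co-orientation $\mu$ (a section of $\mathcal E^*\wedge\mathcal E^*$ with $\mu(e_1,e_2)=\pm1$ on orthonormal frames). A point $p$ is singular if $\psi_p$ is not bijective; $\Sigma$ is the singular set; on a positively oriented chart $(u,v)$, $\lambda=\mu(\psi(\partial_u),\psi(\partial_v))$ and $\Sigma=\{\lambda=0\}$. A singular point is non-degenerate if $d\lambda\ne0$ there; then $\Sigma$ is locally a regular curve and the kernel of $\psi_p$ (the null direction) is one-dimensional. A non-degenerate singular point is an $A_2$-point if the null direction is transversal to the singular curve. A singular point $p$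 that is not an $A_2$-point is a peak if there is a coordinate neighborhood $U$ of $p$ such that (i) all singular points in $U\setminus\{p\}$ are $A_2$-points, (ii) $\operatorname{rank}\psi_p=1$, and (iii) $\Sigma\cap U$ consists of finitely many (possibly zero) $C^1$-regular curves starting from $p$. $g$-coordinate system: fix a Riemannian metric $g$ on $M^2$ and the $(1,1)$-tensor $I$ with $ds^2(X,Y)=g(IX,Y)$, where $ds^2=\psi^*\langle\,,\rangle$. Near a peak $p$, $I$ has two distinct eigenvalues $0\le\lambda_1<\lambda_2$; a $g$-coordinate system at $p$ is a chart $(U;u,v)$ around $p$ such that the $u$-curves are $\lambda_1$-eigendirections and the $v$-curves are $\lambda_2$-eigendirections of $I$ (so $\partial_u$ is the null direction at singular points and $\psi(\partial_v)\ne0$ at $p$). *)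

theory Defs
  imports "HOL-Analysis.Analysis"
begin

text \<open>Local model: a coordinate chart (U; u, v) of M^2 is an open set U of real x real,
a point q = (u, v).  The bundle E restricted to U is trivialised by a positively oriented
orthonormal frame (e1, e2), so a section of E is a map U -> real x real, the fiber metric is
the standard inner product and the co-orientation mu is the determinant.\<close>

type_synonym pt = "real \<times> real"

definition pd_u :: "(pt \<Rightarrow> 'b::real_normed_vector) \<Rightarrow> pt \<Rightarrow> 'b" where
  "pd_u f q = frechet_derivative f (at q) (1, 0)"

definition pd_v :: "(pt \<Rightarrow> 'b::real_normed_vector) \<Rightarrow> pt \<Rightarrow> 'b" where
  "pd_v f q = frechet_derivative f (at q) (0, 1)"

fun iter_pd :: "bool list \<Rightarrow> (pt \<Rightarrow> 'b::real_normed_vector) \<Rightarrow> pt \<Rightarrow> 'b" where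
  "iter_pd [] f = f"
| "iter_pd (b # bs) f = (if b then pd_u else pd_v) (iter_pd bs f)"

definition smooth_on :: "pt set \<Rightarrow> (pt \<Rightarrow> 'b::real_normed_vector) \<Rightarrow> bool" where
  "smooth_on U f \<longleftrightarrow> (\<forall>bs. iter_pd bs f differentiable_on U \<and> continuous_on U (iter_pd bs f))"

text \<open>Rotation by +90 degrees in the fiber (the complex structure of the oriented metric
rank-2 bundle); determinant = co-orientation mu in the oriented orthonormal frame.\<close>
definition rotJ :: "pt \<Rightarrow> pt" where
  "rotJ x = (- snd x, fst x)"

definition det2 :: "pt \<Rightarrow> pt \<Rightarrow> real" where
  "det2 a b = fst a * snd b - snd a * fst b"

text \<open>Coherent tangent bundle data on the chart U: psi_u = psi(d/du), psi_v = psi(d/dv),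
and the metric connection D = d + omega J with connection 1-form omega = w_u du + w_v dv.
The compatibility D_{d/du} psi(d/dv) - D_{d/dv} psi(d/du) = psi([d/du,d/dv]) = 0.\<close>
definition coherent_tb :: "pt set \<Rightarrow> (pt \<Rightarrow> pt) \<Rightarrow> (pt \<Rightarrow> pt) \<Rightarrow> (pt \<Rightarrow> real) \<Rightarrow> (pt \<Rightarrow> real) \<Rightarrow> bool" where
  "coherent_tb U psu psv wu wv \<longleftrightarrow>
     open U \<and> smooth_on U psu \<and> smooth_on U psv \<and> smooth_on U wu \<and> smooth_on U wv \<and>
     (\<forall>q\<in>U. pd_u psv q + wu q *\<^sub>R rotJ (psv q) - pd_v psu q - wv q *\<^sub>R rotJ (psu q) = 0)"

text \<open>psi_q applied to a tangent vector X = a d/du + b d/dv.\<close>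
definition psi_at :: "(pt \<Rightarrow> pt) \<Rightarrow> (pt \<Rightarrow> pt) \<Rightarrow> pt \<Rightarrow> pt \<Rightarrow> pt" where
  "psi_at psu psv q X = fst X *\<^sub>R psu q + snd X *\<^sub>R psv q"

definition lam :: "(pt \<Rightarrow> pt) \<Rightarrow> (pt \<Rightarrow> pt) \<Rightarrow> pt \<Rightarrow> real" where
  "lam psu psv q = det2 (psu q) (psv q)"

definition singular_set :: "pt set \<Rightarrow> (pt \<Rightarrow> pt) \<Rightarrow> (pt \<Rightarrow> pt) \<Rightarrow> pt set" where
  "singular_set U psu psv = {q\<in>U. lam psu psv q = 0}"

definition dlam :: "(pt \<Rightarrow> pt) \<Rightarrow> (pt \<Rightarrow> pt) \<Rightarrow> pt \<Rightarrow> pt \<Rightarrow> real" where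
  "dlam psu psv q X = fst X * pd_u (lam psu psv) q + snd X * pd_v (lam psu psv) q"

definition nondegenerate :: "pt set \<Rightarrow> (pt \<Rightarrow> pt) \<Rightarrow> (pt \<Rightarrow> pt) \<Rightarrow> pt \<Rightarrow> bool" where
  "nondegenerate U psu psv q \<longleftrightarrow> q \<in> singular_set U psu psv \<and>
     (pd_u (lam psu psv) q, pd_v (lam psu psv) q) \<noteq> (0, 0)"

text \<open>A_2-point: non-degenerate and the null direction is transversal to the singular curve
(whose tangent line at a non-degenerate point is ker d lambda).\<close>
definition A2_point :: "pt set \<Rightarrow> (pt \<Rightarrow> pt) \<Rightarrow> (pt \<Rightarrow> pt) \<Rightarrow> pt \<Rightarrow> bool" where
  "A2_point U psu psv q \<longleftrightarrow> nondegenerate U psu psv q \<and>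
     (\<forall>X. X \<noteq> 0 \<and> psi_at psu psv q X = 0 \<longrightarrow> dlam psu psv q X \<noteq> 0)"

definition C1_regular_curve :: "(real \<Rightarrow> pt) \<Rightarrow> (real \<Rightarrow> pt) \<Rightarrow> bool" where
  "C1_regular_curve c c' \<longleftrightarrow>
     (\<forall>t\<in>{0..<1}. (c has_vector_derivative c' t) (at t within {0..<1}) \<and> c' t \<noteq> 0) \<and>
     continuous_on {0..<1} c'"

definition peak :: "pt set \<Rightarrow> (pt \<Rightarrow> pt) \<Rightarrow> (pt \<Rightarrow> pt) \<Rightarrow> pt \<Rightarrow> bool" where
  "peak U psu psv p \<longleftrightarrow>
     p \<in> singular_set U psu psv \<and> \<not> A2_point U psu psv p \<and>
     (\<exists>V. open V \<and> p \<in> V \<and> V \<subseteq> U \<and>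
        (\<forall>q \<in> singular_set U psu psv \<inter> V - {p}. A2_point U psu psv q) \<and>
        (psu p, psv p) \<noteq> (0, 0) \<and>
        (\<exists>C :: ((real \<Rightarrow> pt) \<times> (real \<Rightarrow> pt)) set. finite C \<and>
           (\<forall>(c, c')\<in>C. C1_regular_curve c c' \<and> c 0 = p \<and> c ` {0..<1} \<subseteq> V) \<and>
           singular_set U psu psv \<inter> V = {p} \<union> (\<Union>(c, c')\<in>C. c ` {0..<1})))"

text \<open>(U; u, v) is a g-coordinate system: for some Riemannian metric
g = G11 du^2 + 2 G12 du dv + G22 dv^2 on U, with I defined by ds^2(X,Y) = g(IX,Y),
d/du is an eigenvector of I for the eigenvalue lambda_1 and d/dv for lambda_2,
where 0 <= lambda_1 < lambda_2.  (I e = l e  iff  H e = l G e, H the matrix of ds^2.)\<close>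
definition g_coordinates :: "pt set \<Rightarrow> (pt \<Rightarrow> pt) \<Rightarrow> (pt \<Rightarrow> pt) \<Rightarrow> bool" where
  "g_coordinates U psu psv \<longleftrightarrow>
     (\<exists>G11 G12 G22 :: pt \<Rightarrow> real. smooth_on U G11 \<and> smooth_on U G12 \<and> smooth_on U G22 \<and>
       (\<forall>q\<in>U. G11 q > 0 \<and> G11 q * G22 q - (G12 q)\<^sup>2 > 0 \<and>
          (\<exists>l1 l2. 0 \<le> l1 \<and> l1 < l2 \<and>
             psu q \<bullet> psu q = l1 * G11 q \<and> psv q \<bullet> psu q = l1 * G12 q \<and>
             psu q \<bullet> psv q = l2 * G12 q \<and> psv q \<bullet> psv q = l2 * G22 q)))"

end

theory Submission
  imports Defs
begin

lemma tr_right: "(f \<longlongrightarrow> L) (at (0::real) within {0..<1}) \<Longrightarrow> (f \<longlongrightarrow> L) (at_right 0)"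
  unfolding tendsto_def
proof (intro allI impI)
  fix S assume "\<forall>S. open S \<longrightarrow> L \<in> S \<longrightarrow> eventually (\<lambda>x. f x \<in> S) (at 0 within {0..<1})" "open S" "L \<in> S"
  then obtain d where d: "d > 0" "\<forall>x\<in>{0..<1}. x \<noteq> 0 \<and> dist x 0 < d \<longrightarrow> f x \<in> S"
    unfolding eventually_at by blast
  show "eventually (\<lambda>x. f x \<in> S) (at_right 0)"
    unfolding eventually_at_right_field
    by (rule exI[of _ "min d 1"]) (use d in \<open>auto simp: dist_real_def\<close>)
qed
lemma gfacts: assumes "g_coordinates U psu psv" "q \<in> U"
  shows "psu q \<bullet> psv q = 0" "psv q \<noteq> 0"
proof -
  obtain G11 G12 G22 :: "pt \<Rightarrow> real" where G: "\<forall>q\<in>U. G11 q > 0 \<and> G11 q * G22 q - (G12 q)\<^sup>2 > 0 \<and>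
          (\<exists>l1 l2. 0 \<le> l1 \<and> l1 < l2 \<and>
             psu q \<bullet> psu q = l1 * G11 q \<and> psv q \<bullet> psu q = l1 * G12 q \<and>
             psu q \<bullet> psv q = l2 * G12 q \<and> psv q \<bullet> psv q = l2 * G22 q)"
    using assms(1) unfolding g_coordinates_def by blast
  then obtain l1 l2 where l: "0 \<le> l1" "l1 < l2" "psv q \<bullet> psu q = l1 * G12 q" "psu q \<bullet> psv q = l2 * G12 q"
      "psv q \<bullet> psv q = l2 * G22 q" and g: "G11 q > 0" "G11 q * G22 q - (G12 q)\<^sup>2 > 0"
    using assms(2) by blast
  have "(l2 - l1) * G12 q = 0" using l(3,4) by (simp add: inner_commute algebra_simps)
  hence "G12 q = 0" using l by simp
  thus "psu q \<bullet> psv q = 0" using l by simp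
  have "G22 q > 0" using g \<open>G12 q = 0\<close> by (simp add: zero_less_mult_iff)
  hence "psv q \<bullet> psv q > 0" using l by simp
  thus "psv q \<noteq> 0" by auto
qed
lemma sing0: fixes x y :: pt assumes "x \<bullet> y = 0" "y \<noteq> 0" "det2 x y = 0" shows "x = 0"
proof -
  obtain a b c d where xy: "x = (a,b)" "y = (c,d)" by (cases x, cases y) auto
  have h1: "a*c + b*d = 0" "a*d - b*c = 0" using assms xy by (auto simp: det2_def inner_Pair)
  have pos: "c^2 + d^2 > 0" using assms(2) xy by (simp add: sum_power2_gt_zero_iff zero_prod_def)
  have "a*(c^2+d^2) = c*(a*c+b*d) + d*(a*d-b*c)" by algebra
  hence "a*(c^2+d^2) = 0" using h1 by simp
  hence "a = 0" using pos by auto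
  have "b*(c^2+d^2) = d*(a*c+b*d) - c*(a*d-b*c)" by algebra
  hence "b*(c^2+d^2) = 0" using h1 by simp
  hence "b = 0" using pos by auto
  show ?thesis using xy \<open>a=0\<close> \<open>b=0\<close> by (simp add: zero_prod_def)
qed
lemma chain_zero:
  fixes f :: "pt \<Rightarrow> real"
  assumes "f differentiable (at q)" "(c has_vector_derivative c') (at t)" "c t = q" "open S" "t \<in> S"
    "\<forall>s\<in>S. f (c s) = 0"
  shows "fst c' * pd_u f q + snd c' * pd_v f q = 0"
proof -
  let ?D = "frechet_derivative f (at q)"
  have D: "(f has_derivative ?D) (at q)" using assms(1) frechet_derivative_works by blast
  have "((f \<circ> c) has_derivative ?D \<circ> (\<lambda>h. h *\<^sub>R c')) (at t)"
    using diff_chain_at[of c "\<lambda>h. h *\<^sub>R c'" t f ?D] assms(2,3) D unfolding has_vector_derivative_def by simp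
  moreover have "((f \<circ> c) has_derivative (\<lambda>h. 0)) (at t)"
    by (rule has_derivative_transform_within_open[OF has_derivative_const[of 0] assms(4,5)]) (use assms(6) in auto)
  ultimately have "?D \<circ> (\<lambda>h. h *\<^sub>R c') = (\<lambda>h. 0)" using has_derivative_unique by blast
  hence z: "?D c' = 0" by (metis comp_apply scaleR_one)
  have lin: "linear ?D" using D has_derivative_linear by blast
  have "c' = fst c' *\<^sub>R (1,0) + snd c' *\<^sub>R (0,1)" by (cases c') simp
  hence "?D c' = ?D (fst c' *\<^sub>R (1,0)) + ?D (snd c' *\<^sub>R (0,1))"
    using linear_add[OF lin] by metis
  also have "\<dots> = fst c' * ?D (1,0) + snd c' * ?D (0,1)"
    by (subst linear_cmul[OF lin])+ simp
  finally have "?D c' = fst c' * ?D (1,0) + snd c' * ?D (0,1)" .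
  thus ?thesis using z unfolding pd_u_def pd_v_def by simp
qed
lemma ivt0: fixes f :: "real \<Rightarrow> real"
  assumes "continuous_on {a..c} f" "a \<le> c" "f a * f c \<le> 0" shows "\<exists>x\<in>{a..c}. f x = 0"
proof (cases "f a \<le> 0 \<and> f c \<ge> 0")
  case True then show ?thesis using IVT'[of f a 0 c] assms by auto
next
  case n: False
  show ?thesis
  proof (cases "f a \<ge> 0 \<and> f c \<le> 0")
    case True then show ?thesis using IVT2'[of f c 0 a] assms by auto
  next
    case False
    with n have "f a = 0 \<or> f c = 0" using assms(3) by (auto simp: mult_le_0_iff)
    then show ?thesis using assms(2) by auto
  qed
qed
lemma lam_diff: assumes "psu differentiable (at q)" "psv differentiable (at q)"
  shows "lam psu psv differentiable (at q)"
proof -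
  obtain D1 D2 where "(psu has_derivative D1) (at q)" "(psv has_derivative D2) (at q)"
    using assms unfolding differentiable_def by blast
  hence "((\<lambda>x. fst (psu x) * snd (psv x) - snd (psu x) * fst (psv x)) has_derivative
      (\<lambda>h. fst (psu q) * snd (D2 h) + fst (D1 h) * snd (psv q) - (snd (psu q) * fst (D2 h) + snd (D1 h) * fst (psv q)))) (at q)"
    by (auto intro!: derivative_eq_intros)
  thus ?thesis unfolding lam_def det2_def differentiable_def by (auto simp: fun_eq_iff)
qed
theorem mainTheorem2:
  fixes U :: "pt set" and psu psv :: "pt \<Rightarrow> pt" and wu wv :: "pt \<Rightarrow> real"
    and p :: pt and \<gamma> \<gamma>' :: "real \<Rightarrow> pt"
  assumes "coherent_tb U psu psv wu wv"
    and "p \<in> U"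
    and "peak U psu psv p"
    and "g_coordinates U psu psv"
    and "C1_regular_curve \<gamma> \<gamma>'"
    and "\<gamma> 0 = p"
    and "\<gamma> ` {0..<1} \<subseteq> U"
    and "psi_at psu psv p (\<gamma>' 0) \<noteq> 0 \<or> \<gamma> ` {0..<1} \<subseteq> singular_set U psu psv"
  shows "(\<forall>\<^sub>F t in at_right 0. psi_at psu psv (\<gamma> t) (\<gamma>' t) \<noteq> 0) \<and>
         (\<exists>\<Psi>. ((\<lambda>t. (1 / norm (psi_at psu psv (\<gamma> t) (\<gamma>' t))) *\<^sub>R psi_at psu psv (\<gamma> t) (\<gamma>' t))
                 \<longlongrightarrow> \<Psi>) (at_right 0))"
proof -
  have oU: "open U" and sm: "smooth_on U psu" "smooth_on U psv" using assms(1) unfolding coherent_tb_def by auto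
  have cu: "continuous_on U psu" "continuous_on U psv" and du: "psu differentiable_on U" "psv differentiable_on U"
    using sm unfolding smooth_on_def by (metis iter_pd.simps(1))+
  have dg: "\<forall>t\<in>{0..<1}. (\<gamma> has_vector_derivative \<gamma>' t) (at t within {0..<1}) \<and> \<gamma>' t \<noteq> 0"
    and cg': "continuous_on {0..<1} \<gamma>'" using assms(5) unfolding C1_regular_curve_def by auto
  have d0: "(\<gamma> has_vector_derivative \<gamma>' 0) (at 0 within {0..<1})" using dg by auto
  have g_lim: "(\<gamma> \<longlongrightarrow> p) (at_right 0)"
    using has_vector_derivative_continuous[OF d0] assms(6) unfolding continuous_within by (metis tr_right)
  have g'_lim: "(\<gamma>' \<longlongrightarrow> \<gamma>' 0) (at_right 0)"
    using cg' unfolding continuous_on_def by (intro tr_right) auto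
  have pu_lim: "((\<lambda>t. psu (\<gamma> t)) \<longlongrightarrow> psu p) (at_right 0)"
    by (rule isCont_tendsto_compose[OF _ g_lim]) (use cu(1) oU assms(2) continuous_on_eq_continuous_at in blast)
  have pv_lim: "((\<lambda>t. psv (\<gamma> t)) \<longlongrightarrow> psv p) (at_right 0)"
    by (rule isCont_tendsto_compose[OF _ g_lim]) (use cu(2) oU assms(2) continuous_on_eq_continuous_at in blast)
  define F where "F t = psi_at psu psv (\<gamma> t) (\<gamma>' t)" for t
  have F_lim: "(F \<longlongrightarrow> psi_at psu psv p (\<gamma>' 0)) (at_right 0)"
    unfolding F_def psi_at_def by (intro tendsto_intros pu_lim pv_lim g'_lim)
  from assms(8) show ?thesis
  proof
    assume nz: "psi_at psu psv p (\<gamma>' 0) \<noteq> 0"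
    have "eventually (\<lambda>t. F t \<noteq> 0) (at_right 0)" using tendsto_imp_eventually_ne[OF F_lim nz] .
    moreover have "((\<lambda>t. (1 / norm (F t)) *\<^sub>R F t) \<longlongrightarrow> (1 / norm (psi_at psu psv p (\<gamma>' 0))) *\<^sub>R psi_at psu psv p (\<gamma>' 0)) (at_right 0)"
      by (intro tendsto_intros F_lim) (use nz in simp)
    ultimately show ?thesis unfolding F_def by blast
  next
    assume sg: "\<gamma> ` {0..<1} \<subseteq> singular_set U psu psv"
    obtain V where V: "open V" "p \<in> V" "V \<subseteq> U" "\<forall>q \<in> singular_set U psu psv \<inter> V - {p}. A2_point U psu psv q"
      using assms(3) unfolding peak_def apply (elim conjE exE) apply (rule that) by assumption+
    have psu0: "psu q = 0" if "q \<in> singular_set U psu psv" for q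
      using that sing0[of "psu q" "psv q"] gfacts[OF assms(4)] unfolding singular_set_def lam_def by auto
    have ev1: "eventually (\<lambda>t. \<gamma> t \<in> V) (at_right 0)" using topological_tendstoD[OF g_lim V(1) V(2)] .
    have ev3: "eventually (\<lambda>t. t < 1 \<and> 0 < t) (at_right (0::real))"
      unfolding eventually_at_right_field by (rule exI[of _ 1]) auto
    have ev2: "eventually (\<lambda>t. \<gamma> t \<noteq> p) (at_right 0)"
    proof -
      have hd: "(\<gamma> has_derivative (\<lambda>h. h *\<^sub>R \<gamma>' 0)) (at 0 within {0..<1})"
        using d0 unfolding has_vector_derivative_def .
      have "((\<lambda>y. norm (\<gamma> y - \<gamma> 0 - (y - 0) *\<^sub>R \<gamma>' 0) / norm (y - 0)) \<longlongrightarrow> 0) (at 0 within {0..<1})"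
        using hd unfolding has_derivative_iff_norm by blast
      hence R: "((\<lambda>y. norm (\<gamma> y - \<gamma> 0 - (y - 0) *\<^sub>R \<gamma>' 0) / norm (y - 0)) \<longlongrightarrow> 0) (at_right 0)"
        by (rule tr_right)
      have n0: "norm (\<gamma>' 0) > 0" using dg by auto
      have "eventually (\<lambda>y. norm (\<gamma> y - \<gamma> 0 - (y - 0) *\<^sub>R \<gamma>' 0) / norm (y - 0) < norm (\<gamma>' 0)) (at_right 0)"
        using order_tendstoD(2)[OF R n0] .
      thus ?thesis using ev3
      proof eventually_elim
        case (elim y)
        show ?case
        proof
          assume "\<gamma> y = p"
          hence "norm (\<gamma> y - \<gamma> 0 - (y - 0) *\<^sub>R \<gamma>' 0) / norm (y - 0) = norm (\<gamma>' 0)"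
            using elim(2) assms(6) by simp
          thus False using elim(1) by simp
        qed
      qed
    qed
    have "eventually (\<lambda>t. \<gamma> t \<in> V \<and> \<gamma> t \<noteq> p \<and> t < 1) (at_right 0)"
      using ev1 ev2 ev3 by eventually_elim auto
    then obtain \<delta> :: real where \<delta>: "\<delta> > 0" "\<And>t. 0 < t \<Longrightarrow> t < \<delta> \<Longrightarrow> \<gamma> t \<in> V \<and> \<gamma> t \<noteq> p \<and> t < 1"
      unfolding eventually_at_right_field by auto
    define b where "b t = snd (\<gamma>' t)" for t
    have key: "b t \<noteq> 0 \<and> F t = b t *\<^sub>R psv (\<gamma> t)" if t: "0 < t" "t < \<delta>" for t
    proof -
      have t1: "t \<in> {0..<1}" using \<delta>(2)[OF t] t by auto
      have qs: "\<gamma> t \<in> singular_set U psu psv" using sg t1 by auto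
      hence qU: "\<gamma> t \<in> U" unfolding singular_set_def by auto
      have Fe: "F t = b t *\<^sub>R psv (\<gamma> t)" unfolding F_def psi_at_def b_def using psu0[OF qs] by simp
      have A2: "A2_point U psu psv (\<gamma> t)" using V(4) qs \<delta>(2)[OF t] by auto
      have "b t \<noteq> 0"
      proof
        assume b0: "b t = 0"
        have "psi_at psu psv (\<gamma> t) (\<gamma>' t) = 0" using Fe b0 unfolding F_def by simp
        moreover have "\<gamma>' t \<noteq> 0" using dg t1 by auto
        ultimately have dl: "dlam psu psv (\<gamma> t) (\<gamma>' t) \<noteq> 0" using A2 unfolding A2_point_def by blast
        have ld: "lam psu psv differentiable (at (\<gamma> t))"
          by (rule lam_diff) (use du oU qU differentiable_on_eq_differentiable_at in blast)+
        have "(\<gamma> has_vector_derivative \<gamma>' t) (at t within {0<..<1})"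
          by (rule has_vector_derivative_within_subset[of _ _ _ "{0..<1}"]) (use dg t1 in auto)
        hence hv: "(\<gamma> has_vector_derivative \<gamma>' t) (at t)"
          using at_within_open[of t "{0<..<1}"] t t1 by auto
        have "\<forall>s\<in>{0<..<1}. lam psu psv (\<gamma> s) = 0" using sg unfolding singular_set_def by (auto simp: image_subset_iff)
        hence "fst (\<gamma>' t) * pd_u (lam psu psv) (\<gamma> t) + snd (\<gamma>' t) * pd_v (lam psu psv) (\<gamma> t) = 0"
          using chain_zero[OF ld hv refl, of "{0<..<1}"] t t1 by auto
        thus False using dl unfolding dlam_def by simp
      qed
      thus ?thesis using Fe by simp
    qed
    define t0 where "t0 = \<delta> / 2"
    have t0: "0 < t0" "t0 < \<delta>" using \<delta>(1) unfolding t0_def by auto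
    have cb: "continuous_on {0..<1} b" unfolding b_def using continuous_on_snd[OF cg'] .
    have same: "sgn (b t) = sgn (b t0)" if t: "0 < t" "t < \<delta>" for t
    proof (rule ccontr)
      assume ne: "sgn (b t) \<noteq> sgn (b t0)"
      have nz: "b t \<noteq> 0" "b t0 \<noteq> 0" using key t key t0 by auto
      have neg: "b t * b t0 \<le> 0" using ne nz
        by (cases "b t > 0"; cases "b t0 > 0") (auto simp: mult_le_0_iff)
      define lo where "lo = min t t0"
      define hi where "hi = max t t0"
      have sub: "{lo..hi} \<subseteq> {0<..<\<delta>}" using t t0 unfolding lo_def hi_def by auto
      have "{lo..hi} \<subseteq> {0..<1}" using sub \<delta>(2) by force
      hence "continuous_on {lo..hi} b" using cb continuous_on_subset by blast
      moreover have "b lo * b hi \<le> 0" using neg unfolding lo_def hi_def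
        by (cases "t \<le> t0") (auto simp: min_def max_def mult.commute)
      moreover have "lo \<le> hi" unfolding lo_def hi_def by simp
      ultimately obtain x where "x \<in> {lo..hi}" "b x = 0" using ivt0[of lo hi b] by blast
      thus False using sub key by auto
    qed
    define s where "s = sgn (b t0)"
    have "eventually (\<lambda>t. F t \<noteq> 0 \<and> (1 / norm (F t)) *\<^sub>R F t = s *\<^sub>R ((1 / norm (psv (\<gamma> t))) *\<^sub>R psv (\<gamma> t))) (at_right 0)"
      unfolding eventually_at_right_field
    proof (rule exI[of _ \<delta>], intro conjI allI impI)
      show "0 < \<delta>" by fact
      fix t :: real assume t: "0 < t" "t < \<delta>"
      have qU: "\<gamma> t \<in> U" using sg \<delta>(2)[OF t] t unfolding singular_set_def by (auto simp: image_subset_iff)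
      have v: "psv (\<gamma> t) \<noteq> 0" using gfacts(2)[OF assms(4) qU] .
      have bk: "b t \<noteq> 0" "F t = b t *\<^sub>R psv (\<gamma> t)" using key[OF t] by auto
      show "F t \<noteq> 0" using bk v by simp
      have sb: "sgn (b t) = s" using same[OF t] s_def by simp
      have nF: "norm (F t) = \<bar>b t\<bar> * norm (psv (\<gamma> t))" using bk(2) by (simp only: norm_scaleR real_norm_def)
      have co: "1 / (\<bar>b t\<bar> * norm (psv (\<gamma> t))) * b t = s * (1 / norm (psv (\<gamma> t)))"
      proof -
        have "1 / (\<bar>b t\<bar> * norm (psv (\<gamma> t))) * b t = (b t / \<bar>b t\<bar>) * (1 / norm (psv (\<gamma> t)))"
          by (simp add: field_simps)
        also have "b t / \<bar>b t\<bar> = s" using sb real_sgn_eq by metis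
        finally show ?thesis .
      qed
      have "(1 / norm (F t)) *\<^sub>R F t = (1 / (\<bar>b t\<bar> * norm (psv (\<gamma> t))) * b t) *\<^sub>R psv (\<gamma> t)"
        by (simp only: bk(2) norm_scaleR real_norm_def scaleR_scaleR)
      also have "\<dots> = s *\<^sub>R ((1 / norm (psv (\<gamma> t))) *\<^sub>R psv (\<gamma> t))"
        by (simp only: co scaleR_scaleR)
      finally show "(1 / norm (F t)) *\<^sub>R F t = s *\<^sub>R ((1 / norm (psv (\<gamma> t))) *\<^sub>R psv (\<gamma> t))" .
    qed
    note ev = this
    have L: "((\<lambda>t. s *\<^sub>R ((1 / norm (psv (\<gamma> t))) *\<^sub>R psv (\<gamma> t))) \<longlongrightarrow> s *\<^sub>R ((1 / norm (psv p)) *\<^sub>R psv p)) (at_right 0)"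
      by (rule tendsto_scaleR[OF tendsto_const tendsto_scaleR[OF tendsto_divide[OF tendsto_const tendsto_norm[OF pv_lim]] pv_lim]])
         (use gfacts(2)[OF assms(4,2)] in simp)
    have e1: "eventually (\<lambda>t. F t \<noteq> 0) (at_right 0)" using ev by (rule eventually_mono) (erule conjunct1)
    have eq: "eventually (\<lambda>t. (1 / norm (F t)) *\<^sub>R F t = s *\<^sub>R ((1 / norm (psv (\<gamma> t))) *\<^sub>R psv (\<gamma> t))) (at_right 0)"
      using ev by (rule eventually_mono) (erule conjunct2)
    have lim: "((\<lambda>t. (1 / norm (F t)) *\<^sub>R F t) \<longlongrightarrow> s *\<^sub>R ((1 / norm (psv p)) *\<^sub>R psv p)) (at_right 0)"
      by (subst tendsto_cong[OF eq]) (rule L)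
    show ?thesis
      apply (rule conjI) apply (rule e1[unfolded F_def]) apply (rule exI) apply (rule lim[unfolded F_def]) done
  qed
qed

end
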